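(* Let $G$ be a graph. The following are equivalent: (a1) $M_1(G)$ is a non-trivial matroid and $G$ is a connected cacti-graph; (a2) $M_1(G)$ is a connected matroid.
   Context: Graphs are finite, may have loops and parallel edges, and have no isolated vertices. A leaf is a vertex incident to exactly one edge, which is not a loop. A cacti-graph is a graph with no isolated vertices, no leaves, and no component that is a cycle. For $X\subseteq E(G)$, $G\langle X\rangle$ is the subgraph with edge set $X$ and vertex set the vertices incident to $X$. $M_1(G)$ is the matroid on $E(G)$ whose circuits are the inclusion-minimal members of $\{C\subseteq E(G):C\neq\emptyset,\ |C|=|V(G\langle C\rangle)|+1\}$. A matroid is non-trivial if it has at least one circuit and at least one cocircuit; it is connected if its ground set has at least two elements and every two elements lie in a common circuit. *)

theory Defs
  imports Main
begin

text \<open>A (multi)graph is given by a finite edge set E and an endpoint map ends: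
  each edge has one endpoint (a loop) or two endpoints.  Since graphs have no
  isolated vertices, the vertex set is the set of all endpoints.\<close>

definition graph :: "'e set \<Rightarrow> ('e \<Rightarrow> 'v set) \<Rightarrow> bool" where
  "graph E ends \<longleftrightarrow> finite E \<and> (\<forall>e\<in>E. card (ends e) = 1 \<or> card (ends e) = 2)"

definition verts :: "'e set \<Rightarrow> ('e \<Rightarrow> 'v set) \<Rightarrow> 'v set" where
  "verts E ends = \<Union> (ends ` E)"

definition is_loop :: "('e \<Rightarrow> 'v set) \<Rightarrow> 'e \<Rightarrow> bool" where
  "is_loop ends e \<longleftrightarrow> card (ends e) = 1"

definition incident_edges :: "'e set \<Rightarrow> ('e \<Rightarrow> 'v set) \<Rightarrow> 'v \<Rightarrow> 'e set" where
  "incident_edges E ends v = {e\<in>E. v \<in> ends e}"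

definition degree :: "'e set \<Rightarrow> ('e \<Rightarrow> 'v set) \<Rightarrow> 'v \<Rightarrow> nat" where
  "degree E ends v = (\<Sum>e\<in>incident_edges E ends v. if is_loop ends e then 2 else 1)"

definition is_leaf :: "'e set \<Rightarrow> ('e \<Rightarrow> 'v set) \<Rightarrow> 'v \<Rightarrow> bool" where
  "is_leaf E ends v \<longleftrightarrow> v \<in> verts E ends \<and>
     (\<exists>e. incident_edges E ends v = {e} \<and> \<not> is_loop ends e)"

definition adj :: "'e set \<Rightarrow> ('e \<Rightarrow> 'v set) \<Rightarrow> ('v \<times> 'v) set" where
  "adj E ends = {(u, w). \<exists>e\<in>E. u \<in> ends e \<and> w \<in> ends e}"

definition reach :: "'e set \<Rightarrow> ('e \<Rightarrow> 'v set) \<Rightarrow> 'v \<Rightarrow> 'v \<Rightarrow> bool" where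
  "reach E ends u w \<longleftrightarrow> (u, w) \<in> (adj E ends)\<^sup>*"

definition graph_connected :: "'e set \<Rightarrow> ('e \<Rightarrow> 'v set) \<Rightarrow> bool" where
  "graph_connected E ends \<longleftrightarrow> verts E ends \<noteq> {} \<and>
     (\<forall>u\<in>verts E ends. \<forall>w\<in>verts E ends. reach E ends u w)"

definition component_edges :: "'e set \<Rightarrow> ('e \<Rightarrow> 'v set) \<Rightarrow> 'v \<Rightarrow> 'e set" where
  "component_edges E ends v = {e\<in>E. \<exists>u\<in>ends e. reach E ends v u}"

text \<open>A cycle: a connected graph in which every vertex has degree 2
  (includes a single loop and a pair of parallel edges).\<close>
definition is_cycle_graph :: "'e set \<Rightarrow> ('e \<Rightarrow> 'v set) \<Rightarrow> bool" where
  "is_cycle_graph E ends \<longleftrightarrow> graph_connected E ends \<and>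
     (\<forall>v\<in>verts E ends. degree E ends v = 2)"

definition cacti_graph :: "'e set \<Rightarrow> ('e \<Rightarrow> 'v set) \<Rightarrow> bool" where
  "cacti_graph E ends \<longleftrightarrow>
     (\<forall>v\<in>verts E ends. \<not> is_leaf E ends v) \<and>
     (\<forall>v\<in>verts E ends. \<not> is_cycle_graph (component_edges E ends v) ends)"

text \<open>Circuits of M_1(G): inclusion-minimal nonempty C \<subseteq> E with |C| = |V(G<C>)| + 1.
  Here V(G<C>) = verts C ends.\<close>
definition M1_circuit :: "'e set \<Rightarrow> ('e \<Rightarrow> 'v set) \<Rightarrow> 'e set \<Rightarrow> bool" where
  "M1_circuit E ends C \<longleftrightarrow>
     (let P = (\<lambda>D. D \<subseteq> E \<and> D \<noteq> {} \<and> card D = card (verts D ends) + 1)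
      in P C \<and> (\<forall>D. P D \<and> D \<subseteq> C \<longrightarrow> D = C))"

definition mat_indep :: "'e set \<Rightarrow> ('e set \<Rightarrow> bool) \<Rightarrow> 'e set \<Rightarrow> bool" where
  "mat_indep E circ X \<longleftrightarrow> X \<subseteq> E \<and> (\<forall>C. circ C \<longrightarrow> \<not> C \<subseteq> X)"

definition mat_basis :: "'e set \<Rightarrow> ('e set \<Rightarrow> bool) \<Rightarrow> 'e set \<Rightarrow> bool" where
  "mat_basis E circ B \<longleftrightarrow> mat_indep E circ B \<and>
     (\<forall>X. mat_indep E circ X \<and> B \<subseteq> X \<longrightarrow> X = B)"

definition mat_cocircuit :: "'e set \<Rightarrow> ('e set \<Rightarrow> bool) \<Rightarrow> 'e set \<Rightarrow> bool" where
  "mat_cocircuit E circ D \<longleftrightarrow>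
     (let P = (\<lambda>D. D \<subseteq> E \<and> D \<noteq> {} \<and> (\<forall>B. mat_basis E circ B \<longrightarrow> D \<inter> B \<noteq> {}))
      in P D \<and> (\<forall>D'. P D' \<and> D' \<subseteq> D \<longrightarrow> D' = D))"

definition mat_nontrivial :: "'e set \<Rightarrow> ('e set \<Rightarrow> bool) \<Rightarrow> bool" where
  "mat_nontrivial E circ \<longleftrightarrow> (\<exists>C. circ C) \<and> (\<exists>D. mat_cocircuit E circ D)"

definition mat_connected :: "'e set \<Rightarrow> ('e set \<Rightarrow> bool) \<Rightarrow> bool" where
  "mat_connected E circ \<longleftrightarrow> card E \<ge> 2 \<and>
     (\<forall>x\<in>E. \<forall>y\<in>E. \<exists>C. circ C \<and> x \<in> C \<and> y \<in> C)"

end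

theory Submission
  imports Defs
begin



locale G = fixes E :: "'e set" and ends :: "'e \<Rightarrow> 'v set"
  assumes gr: "graph E ends"
begin

abbreviation V where "V X \<equiv> verts X ends"
abbreviation circ where "circ C \<equiv> M1_circuit E ends C"
definition sparse where "sparse X \<longleftrightarrow> (\<forall>Y\<subseteq>X. card Y \<le> card (V Y))"

lemma finE: "finite E" using gr by (simp add: graph_def)

lemma ends_card: "e \<in> E \<Longrightarrow> card (ends e) = 1 \<or> card (ends e) = 2"
  using gr by (simp add: graph_def)

lemma ends_fin: "e \<in> E \<Longrightarrow> finite (ends e)"
  using ends_card by (metis card.infinite zero_neq_numeral zero_neq_one)

lemma ends_ne: "e \<in> E \<Longrightarrow> ends e \<noteq> {}"
  using ends_card by fastforce

lemma V_fin: "X \<subseteq> E \<Longrightarrow> finite (V X)"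
  unfolding verts_def using finE ends_fin
  by (meson finite_UN_I finite_subset in_mono)

lemma V_mono: "X \<subseteq> Y \<Longrightarrow> V X \<subseteq> V Y" unfolding verts_def by auto
lemma V_Un: "V (X \<union> Y) = V X \<union> V Y" unfolding verts_def by auto
lemma V_insert: "V (insert h X) = ends h \<union> V X" unfolding verts_def by auto
lemma V_empty: "V {} = {}" unfolding verts_def by auto
lemma V_mem: "v \<in> V X \<longleftrightarrow> (\<exists>h\<in>X. v \<in> ends h)" unfolding verts_def by auto

lemma circ_def': "circ C \<longleftrightarrow> C \<subseteq> E \<and> C \<noteq> {} \<and> card C = card (V C) + 1 \<and>
   (\<forall>D. D \<subseteq> E \<and> D \<noteq> {} \<and> card D = card (V D) + 1 \<and> D \<subseteq> C \<longrightarrow> D = C)"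
  unfolding M1_circuit_def Let_def by blast

lemma over_has_circ:
  assumes "Y \<subseteq> E" "card Y > card (V Y)"
  shows "\<exists>C. circ C \<and> C \<subseteq> Y"
proof -
  let ?S = "{Z. Z \<subseteq> Y \<and> card Z > card (V Z)}"
  have ne: "Y \<in> ?S" using assms by auto
  from ex_has_least_nat[of "\<lambda>Z. Z \<in> ?S" Y card, OF ne]
  obtain Z where Z: "Z \<in> ?S" "\<forall>Z'. Z' \<in> ?S \<longrightarrow> card Z \<le> card Z'"
    by blast
  have ZY: "Z \<subseteq> Y" and Zo: "card Z > card (V Z)" using Z(1) by auto
  have finY: "finite Y" using assms(1) finE finite_subset by blast
  have finZ: "finite Z" using ZY finY finite_subset by blast
  have ZE: "Z \<subseteq> E" using ZY assms(1) by auto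
  have Zne: "Z \<noteq> {}" using Zo by (auto simp: V_empty)
  then obtain z where z: "z \<in> Z" by auto
  have "\<not> card (Z - {z}) > card (V (Z - {z}))"
  proof
    assume "card (Z - {z}) > card (V (Z - {z}))"
    hence "Z - {z} \<in> ?S" using ZY by auto
    hence "card Z \<le> card (Z - {z})" using Z(2) by auto
    thus False using card_Diff1_less[OF finZ z] by linarith
  qed
  hence "card Z - 1 \<le> card (V (Z - {z}))" using finZ z by (simp add: card_Diff_singleton)
  moreover have "card (V (Z - {z})) \<le> card (V Z)"
    by (rule card_mono[OF V_fin[OF ZE] V_mono]) auto
  ultimately have eq: "card Z = card (V Z) + 1" using Zo by linarith
  have "circ Z" unfolding circ_def'
  proof (intro conjI allI impI)
    fix D assume D: "D \<subseteq> E \<and> D \<noteq> {} \<and> card D = card (V D) + 1 \<and> D \<subseteq> Z"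
    hence "D \<in> ?S" using ZY by auto
    hence "card Z \<le> card D" using Z(2) by auto
    thus "D = Z" using D finZ by (meson card_seteq)
  qed (use ZE Zne eq in auto)
  thus ?thesis using ZY by blast
qed

lemma circ_sub: assumes "circ C" shows "C \<subseteq> E" using assms unfolding circ_def' by blast
lemma circ_ne: assumes "circ C" shows "C \<noteq> {}" using assms unfolding circ_def' by blast
lemma circ_card: assumes "circ C" shows "card C = card (V C) + 1" using assms unfolding circ_def' by blast
lemma circ_fin: assumes "circ C" shows "finite C" using circ_sub[OF assms] finE finite_subset by blast

lemma circ_subset_eq: assumes "circ C1" "circ C2" "C1 \<subseteq> C2" shows "C1 = C2"
proof -
  have "C1 \<subseteq> E \<and> C1 \<noteq> {} \<and> card C1 = card (V C1) + 1 \<and> C1 \<subseteq> C2"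
    using assms circ_sub circ_ne circ_card by blast
  thus ?thesis using assms(2) unfolding circ_def' by blast
qed

lemma circ_proper:
  assumes "circ C" "D \<subseteq> C" "D \<noteq> C"
  shows "card D \<le> card (V D)"
proof (rule ccontr)
  assume "\<not> ?thesis"
  hence ov: "card D > card (V D)" by simp
  have "D \<subseteq> E" using circ_sub[OF assms(1)] assms(2) by blast
  from over_has_circ[OF this ov] obtain C' where "circ C'" "C' \<subseteq> D" by blast
  moreover have "C' \<subseteq> C" using \<open>C' \<subseteq> D\<close> assms(2) by blast
  ultimately have "C' = C" using circ_subset_eq[OF _ assms(1)] by blast
  thus False using \<open>C' \<subseteq> D\<close> assms(2,3) by blast
qed

lemma circ_not_sub_sparse: assumes "sparse X" "circ C" shows "\<not> C \<subseteq> X"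
proof
  assume "C \<subseteq> X"
  hence "card C \<le> card (V C)" using assms(1) unfolding sparse_def by blast
  thus False using circ_card[OF assms(2)] by simp
qed

lemma sparse_I: assumes "X \<subseteq> E" "\<And>C. circ C \<Longrightarrow> \<not> C \<subseteq> X" shows "sparse X"
  unfolding sparse_def
proof (intro allI impI)
  fix Y assume Y: "Y \<subseteq> X"
  show "card Y \<le> card (V Y)"
  proof (rule ccontr)
    assume "\<not> ?thesis"
    hence ov: "card Y > card (V Y)" by simp
    have "Y \<subseteq> E" using Y assms(1) by blast
    from over_has_circ[OF this ov] obtain C where "circ C" "C \<subseteq> Y" by blast
    thus False using assms(2) Y by blast
  qed
qed

lemma sparse_sub: "sparse X \<Longrightarrow> Y \<subseteq> X \<Longrightarrow> sparse Y" unfolding sparse_def by blast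

lemma card_V_ge1: assumes "h \<in> X" "X \<subseteq> E" shows "card (V X) \<ge> 1"
proof -
  obtain v where "v \<in> ends h" using ends_ne[of h] assms by blast
  hence "v \<in> V X" using assms(1) unfolding V_mem by blast
  thus ?thesis using V_fin[OF assms(2)] by (simp add: Suc_le_eq card_gt_0_iff) blast
qed

lemma circ_card2: assumes "circ C" shows "card C \<ge> 2"
proof -
  obtain h where "h \<in> C" using circ_ne[OF assms] by blast
  thus ?thesis using card_V_ge1[OF _ circ_sub[OF assms]] circ_card[OF assms] by fastforce
qed

lemma weak_elim:
  assumes c1: "circ C1" and c2: "circ C2" and ne: "C1 \<noteq> C2" and e: "e \<in> C1" "e \<in> C2"
  shows "\<exists>C. circ C \<and> C \<subseteq> (C1 \<union> C2) - {e}"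
proof -
  have f1: "finite C1" "finite C2" using c1 c2 circ_fin by auto
  have E1: "C1 \<subseteq> E" "C2 \<subseteq> E" using c1 c2 circ_sub by auto
  have "C1 \<inter> C2 \<noteq> C1" using circ_subset_eq[OF c1 c2] ne by blast
  hence I: "card (C1 \<inter> C2) \<le> card (V (C1 \<inter> C2))" using circ_proper[OF c1] by blast
  have VI: "card (V (C1 \<inter> C2)) \<le> card (V C1 \<inter> V C2)"
  proof (rule card_mono)
    show "finite (V C1 \<inter> V C2)" using V_fin[OF E1(1)] by simp
    show "V (C1 \<inter> C2) \<subseteq> V C1 \<inter> V C2" using V_mono[of "C1 \<inter> C2" C1] V_mono[of "C1 \<inter> C2" C2] by blast
  qed
  have U: "card (C1 \<union> C2) + card (C1 \<inter> C2) = card C1 + card C2"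
    using card_Un_Int[OF f1] by simp
  have UV: "card (V C1 \<union> V C2) + card (V C1 \<inter> V C2) = card (V C1) + card (V C2)"
    using card_Un_Int[OF V_fin[OF E1(1)] V_fin[OF E1(2)]] by simp
  have "card (C1 \<union> C2) \<ge> card (V (C1 \<union> C2)) + 2"
    using U UV I VI circ_card[OF c1] circ_card[OF c2] unfolding V_Un by linarith
  moreover have "card ((C1 \<union> C2) - {e}) = card (C1 \<union> C2) - 1" using e f1 by simp
  moreover have UE: "C1 \<union> C2 \<subseteq> E" using E1 by simp
  moreover have "card (V ((C1 \<union> C2) - {e})) \<le> card (V (C1 \<union> C2))"
    using card_mono[OF V_fin[OF UE] V_mono[of "(C1 \<union> C2) - {e}" "C1 \<union> C2"]] by simp
  ultimately have ov: "card ((C1 \<union> C2) - {e}) > card (V ((C1 \<union> C2) - {e}))" by linarith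
  have "(C1 \<union> C2) - {e} \<subseteq> E" using E1 by auto
  from over_has_circ[OF this ov] show ?thesis .
qed

lemma card_lt: assumes a: "finite B" "A \<subseteq> B" "x \<in> B" "x \<notin> A" shows "card A < card B"
proof -
  have "A \<subset> B" using a by blast
  thus ?thesis using psubset_card_mono[OF a(1)] by blast
qed

lemma strong_elim:
  "circ C1 \<Longrightarrow> circ C2 \<Longrightarrow> e \<in> C1 \<Longrightarrow> e \<in> C2 \<Longrightarrow> f \<in> C1 \<Longrightarrow> f \<notin> C2 \<Longrightarrow>
   \<exists>C. circ C \<and> C \<subseteq> (C1 \<union> C2) - {e} \<and> f \<in> C"
proof (induction "card (C1 \<union> C2)" arbitrary: C1 C2 e f rule: less_induct)
  case less
  have fin: "finite (C1 \<union> C2)" using circ_fin[OF less.prems(1)] circ_fin[OF less.prems(2)] by simp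
  obtain C3 where C3: "circ C3" "C3 \<subseteq> (C1 \<union> C2) - {e}"
  proof -
    have "C1 \<noteq> C2" using less.prems(5,6) by blast
    from weak_elim[OF less.prems(1,2) this less.prems(3,4)] show ?thesis using that by blast
  qed
  show ?case
  proof (cases "f \<in> C3")
    case True thus ?thesis using C3 by blast
  next
    case False
    have "\<not> C3 \<subseteq> C1"
    proof
      assume "C3 \<subseteq> C1"
      hence "C3 = C1" using circ_subset_eq[OF C3(1) less.prems(1)] by simp
      thus False using C3(2) less.prems(3) by blast
    qed
    then obtain g where g: "g \<in> C3" "g \<in> C2" "g \<notin> C1" using C3(2) by blast
    have lt1: "card (C2 \<union> C3) < card (C1 \<union> C2)"
      by (rule card_lt[OF fin, of _ f]) (use C3(2) False less.prems(5,6) in auto)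
    obtain C4 where C4: "circ C4" "C4 \<subseteq> (C2 \<union> C3) - {g}" "e \<in> C4"
    proof -
      have "e \<notin> C3" using C3(2) by blast
      from less.hyps[OF lt1 less.prems(2) C3(1) g(2) g(1) less.prems(4) this] show ?thesis using that by blast
    qed
    have lt2: "card (C1 \<union> C4) < card (C1 \<union> C2)"
      by (rule card_lt[OF fin, of _ g]) (use C3(2) C4(2) g in auto)
    obtain C5 where C5: "circ C5" "C5 \<subseteq> (C1 \<union> C4) - {e}" "f \<in> C5"
    proof -
      have "f \<notin> C4" using C4(2) False less.prems(6) by blast
      from less.hyps[OF lt2 less.prems(1) C4(1) less.prems(3) C4(3) less.prems(5) this] show ?thesis using that by blast
    qed
    have "C5 \<subseteq> (C1 \<union> C2) - {e}" using C5(2) C4(2) C3(2) by blast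
    thus ?thesis using C5 by blast
  qed
qed

lemma circ_trans:
  "circ C1 \<Longrightarrow> circ C2 \<Longrightarrow> x \<in> C1 \<Longrightarrow> z \<in> C2 \<Longrightarrow> C1 \<inter> C2 \<noteq> {} \<Longrightarrow>
   \<exists>C. circ C \<and> x \<in> C \<and> z \<in> C"
proof (induction "card (C1 \<union> C2)" arbitrary: C1 C2 rule: less_induct)
  case less
  have fin: "finite (C1 \<union> C2)" using circ_fin[OF less.prems(1)] circ_fin[OF less.prems(2)] by simp
  show ?case
  proof (cases "z \<in> C1 \<or> x \<in> C2")
    case True thus ?thesis using less.prems(1-4) by blast
  next
    case False
    obtain y where y: "y \<in> C1" "y \<in> C2" using less.prems(5) by blast
    obtain C3 where C3: "circ C3" "C3 \<subseteq> (C1 \<union> C2) - {y}" "x \<in> C3"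
    proof -
      have "x \<notin> C2" using False by blast
      from strong_elim[OF less.prems(1,2) y less.prems(3) this] show ?thesis using that by blast
    qed
    show ?thesis
    proof (cases "z \<in> C3")
      case True thus ?thesis using C3 by blast
    next
      case zn: False
      have "\<not> C3 \<subseteq> C1"
      proof
        assume "C3 \<subseteq> C1"
        hence "C3 = C1" using circ_subset_eq[OF C3(1) less.prems(1)] by simp
        thus False using C3(2) y by blast
      qed
      then obtain w where w: "w \<in> C3" "w \<in> C2" "w \<notin> C1" using C3(2) by blast
      obtain C4 where C4: "circ C4" "C4 \<subseteq> (C2 \<union> C3) - {w}" "z \<in> C4"
        using strong_elim[OF less.prems(2) C3(1) w(2) w(1) less.prems(4) zn] by blast
      have "C1 \<inter> C4 \<noteq> {}"
      proof
        assume "C1 \<inter> C4 = {}"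
        hence "C4 \<subseteq> C2" using C4(2) C3(2) by blast
        hence "C4 = C2" using circ_subset_eq[OF C4(1) less.prems(2)] by simp
        thus False using C4(2) w by blast
      qed
      moreover have lt: "card (C1 \<union> C4) < card (C1 \<union> C2)"
        by (rule card_lt[OF fin, of _ w]) (use C3(2) C4(2) w in auto)
      ultimately show ?thesis using less.hyps[OF lt less.prems(1) C4(1) less.prems(3) C4(3)] by blast
    qed
  qed
qed

end



context G begin

definition cw :: "'e \<Rightarrow> nat" where "cw h = (if is_loop ends h then 2 else 1)"

lemma deg_eq: assumes "finite F"
  shows "degree F ends v = (\<Sum>h\<in>F. if v \<in> ends h then cw h else 0)"
proof -
  have "degree F ends v = (\<Sum>h\<in>{h\<in>F. v \<in> ends h}. cw h)"
    unfolding degree_def incident_edges_def cw_def by simp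
  also have "\<dots> = (\<Sum>h\<in>F. if v \<in> ends h then cw h else 0)"
    using sum.inter_filter[OF assms] by simp
  finally show ?thesis .
qed

lemma deg_sum: assumes "finite F" "finite S"
  shows "(\<Sum>v\<in>S. degree F ends v) = (\<Sum>h\<in>F. cw h * card (ends h \<inter> S))"
proof -
  have "(\<Sum>v\<in>S. degree F ends v) = (\<Sum>v\<in>S. \<Sum>h\<in>F. if v \<in> ends h then cw h else 0)"
    using deg_eq[OF assms(1)] by simp
  also have "\<dots> = (\<Sum>h\<in>F. \<Sum>v\<in>S. if v \<in> ends h then cw h else 0)"
    by (rule sum.swap)
  also have "\<dots> = (\<Sum>h\<in>F. cw h * card (ends h \<inter> S))"
  proof (rule sum.cong[OF refl])
    fix h assume "h \<in> F"
    have "(\<Sum>v\<in>S. if v \<in> ends h then cw h else 0) = (\<Sum>v\<in>{v\<in>S. v \<in> ends h}. cw h)"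
      using sum.inter_filter[OF assms(2), of "\<lambda>_. cw h" "\<lambda>v. v \<in> ends h"] by simp
    also have "\<dots> = cw h * card {v\<in>S. v \<in> ends h}" by simp
    also have "{v\<in>S. v \<in> ends h} = ends h \<inter> S" by blast
    finally show "(\<Sum>v\<in>S. if v \<in> ends h then cw h else 0) = cw h * card (ends h \<inter> S)" .
  qed
  finally show ?thesis .
qed

lemma cw_card: assumes "h \<in> E" shows "cw h * card (ends h) = 2"
  using ends_card[OF assms] unfolding cw_def is_loop_def by auto

lemma handshake: assumes "D \<subseteq> E"
  shows "(\<Sum>v\<in>V D. degree D ends v) = 2 * card D"
proof -
  have fD: "finite D" using assms finE finite_subset by blast
  have "(\<Sum>v\<in>V D. degree D ends v) = (\<Sum>h\<in>D. cw h * card (ends h \<inter> V D))"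
    using deg_sum[OF fD V_fin[OF assms]] .
  also have "\<dots> = (\<Sum>h\<in>D. 2)"
  proof (rule sum.cong[OF refl])
    fix h assume h: "h \<in> D"
    have "ends h \<inter> V D = ends h" using h unfolding verts_def by blast
    thus "cw h * card (ends h \<inter> V D) = 2" using cw_card[of h] h assms by auto
  qed
  finally show ?thesis by simp
qed

lemma deg_mono: assumes "D \<subseteq> F" "finite F" shows "degree D ends v \<le> degree F ends v"
  unfolding degree_def
proof (rule sum_mono2)
  show "finite (incident_edges F ends v)" using assms(2) unfolding incident_edges_def by simp
  show "incident_edges D ends v \<subseteq> incident_edges F ends v" using assms(1) unfolding incident_edges_def by blast
qed auto

lemma deg_ge1: assumes "X \<subseteq> E" "v \<in> V X" shows "degree X ends v \<ge> 1"
proof -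
  obtain h where h: "h \<in> X" "v \<in> ends h" using assms(2) unfolding V_mem by blast
  have fX: "finite X" using assms(1) finE finite_subset by blast
  have "degree {h} ends v \<le> degree X ends v" using deg_mono[of "{h}" X] h fX by simp
  moreover have "degree {h} ends v \<ge> 1"
  proof -
    have "incident_edges {h} ends v = {h}" using h unfolding incident_edges_def by auto
    thus ?thesis unfolding degree_def by simp
  qed
  ultimately show ?thesis by simp
qed

lemma deg_ge2: assumes "X \<subseteq> E" "v \<in> V X" "\<not> is_leaf X ends v" shows "degree X ends v \<ge> 2"
proof -
  let ?I = "incident_edges X ends v"
  have fX: "finite X" using assms(1) finE finite_subset by blast
  have fI: "finite ?I" using fX unfolding incident_edges_def by simp
  obtain h where h: "h \<in> X" "v \<in> ends h" using assms(2) unfolding V_mem by blast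
  have hI: "h \<in> ?I" using h unfolding incident_edges_def by simp
  show ?thesis
  proof (cases "?I = {h}")
    case True
    hence "is_loop ends h" using assms(2,3) unfolding is_leaf_def by blast
    thus ?thesis using True unfolding degree_def by simp
  next
    case False
    then obtain h' where h': "h' \<in> ?I" "h' \<noteq> h" using hI by blast
    have "degree {h, h'} ends v \<le> degree X ends v"
      using deg_mono[of "{h,h'}" X] h h' fX unfolding incident_edges_def by simp
    moreover have "degree {h, h'} ends v \<ge> 2"
    proof -
      have "incident_edges {h, h'} ends v = {h, h'}" using h h' unfolding incident_edges_def by auto
      hence "degree {h, h'} ends v = (\<Sum>e\<in>{h,h'}. if is_loop ends e then 2 else 1)"
        unfolding degree_def by simp
      also have "\<dots> \<ge> (\<Sum>e\<in>{h,h'}. (1::nat))" by (rule sum_mono) simp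
      finally show ?thesis using h'(2) by simp
    qed
    ultimately show ?thesis by simp
  qed
qed

lemma sep_conn:
  assumes conn: "graph_connected E ends" and P: "P \<subseteq> E" and disj: "V P \<inter> V (E - P) = {}"
  shows "P = {} \<or> P = E"
proof (rule ccontr)
  assume "\<not> ?thesis"
  then obtain h h' where h: "h \<in> P" and h': "h' \<in> E" "h' \<notin> P" using P by blast
  obtain u where u: "u \<in> ends h" using ends_ne[of h] h P by blast
  obtain w where w: "w \<in> ends h'" using ends_ne[of h'] h' by blast
  have uV: "u \<in> V E" "w \<in> V E" using u w h h' P unfolding V_mem by blast+
  have "(u, w) \<in> (adj E ends)\<^sup>*" using conn uV unfolding graph_connected_def reach_def by blast
  moreover have "\<And>z. (u, z) \<in> (adj E ends)\<^sup>* \<Longrightarrow> z \<in> V P"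
  proof -
    fix z assume "(u, z) \<in> (adj E ends)\<^sup>*"
    thus "z \<in> V P"
    proof (induction rule: rtrancl_induct)
      case base thus ?case using u h unfolding V_mem by blast
    next
      case (step y z)
      obtain e where e: "e \<in> E" "y \<in> ends e" "z \<in> ends e" using step(2) unfolding adj_def by blast
      show ?case
      proof (cases "e \<in> P")
        case True thus ?thesis using e unfolding V_mem by blast
      next
        case False
        hence "y \<in> V (E - P)" using e unfolding V_mem by blast
        thus ?thesis using step(3) disj by blast
      qed
    qed
  qed
  ultimately have "w \<in> V P" by blast
  moreover have "w \<in> V (E - P)" using w h' unfolding V_mem by blast
  ultimately show False using disj by blast
qed

lemma circ_split:
  assumes c: "circ C" and P: "C \<inter> P \<noteq> {}" "C - P \<noteq> {}" and disj: "V P \<inter> V (E - P) = {}"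
  shows False
proof -
  have CE: "C \<subseteq> E" using circ_sub[OF c] .
  have fC: "finite C" using circ_fin[OF c] .
  have 1: "card (C \<inter> P) \<le> card (V (C \<inter> P))" using circ_proper[OF c, of "C \<inter> P"] P(2) by blast
  have 2: "card (C - P) \<le> card (V (C - P))" using circ_proper[OF c, of "C - P"] P(1) by blast
  have dd: "V (C \<inter> P) \<inter> V (C - P) = {}"
  proof -
    have "V (C \<inter> P) \<subseteq> V P" by (rule V_mono) blast
    moreover have "V (C - P) \<subseteq> V (E - P)" by (rule V_mono) (use CE in blast)
    ultimately show ?thesis using disj by blast
  qed
  have "card C = card (C \<inter> P) + card (C - P)" using card_Int_Diff[OF fC] by simp
  also have "\<dots> \<le> card (V (C \<inter> P)) + card (V (C - P))" using 1 2 by simp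
  also have "\<dots> = card (V (C \<inter> P) \<union> V (C - P))"
  proof (rule card_Un_disjoint[symmetric])
    show "finite (V (C \<inter> P))" using V_fin[of "C \<inter> P"] CE by blast
    show "finite (V (C - P))" using V_fin[of "C - P"] CE by blast
  qed (rule dd)
  also have "V (C \<inter> P) \<union> V (C - P) = V C" unfolding V_Un[symmetric] by (simp add: Int_Diff_Un)
  finally show False using circ_card[OF c] by simp
qed

end



context G begin

lemma sparse_insert_new:
  assumes X: "sparse X" "X \<subseteq> E" and h: "h \<in> E" and v: "v \<in> ends h" "v \<notin> V X"
  shows "sparse (insert h X)"
  unfolding sparse_def
proof (intro allI impI)
  fix Y assume Y: "Y \<subseteq> insert h X"
  show "card Y \<le> card (V Y)"
  proof (cases "h \<in> Y")
    case False
    hence "Y \<subseteq> X" using Y by blast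
    thus ?thesis using X(1) unfolding sparse_def by blast
  next
    case True
    let ?Y = "Y - {h}"
    have Y'X: "?Y \<subseteq> X" using Y by blast
    have c1: "card ?Y \<le> card (V ?Y)" using X(1) Y'X unfolding sparse_def by blast
    have YE: "Y \<subseteq> E" using Y X(2) h by blast
    have fY: "finite Y" using YE finE finite_subset by blast
    have "card Y > 0" using True fY card_gt_0_iff by blast
    hence cY: "card Y = card ?Y + 1" using True by (simp add: card_Diff_singleton)
    have sub: "V ?Y \<subseteq> V Y" by (rule V_mono) blast
    have vin: "v \<in> V Y" using True v(1) unfolding V_mem by blast
    have vout: "v \<notin> V ?Y" using V_mono[OF Y'X] v(2) by blast
    have "card (V ?Y) < card (V Y)"
      by (rule card_lt[OF V_fin[OF YE] sub vin vout])
    thus ?thesis using c1 cY by simp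
  qed
qed

lemma tight_union:
  assumes X: "sparse X" "X \<subseteq> E" and P: "P \<subseteq> X" "card P = card (V P)"
     and Q: "Q \<subseteq> X" "card Q = card (V Q)"
  shows "card (P \<union> Q) = card (V (P \<union> Q))"
proof -
  have fX: "finite X" using X(2) finE finite_subset by blast
  have fP: "finite P" "finite Q" using P Q fX finite_subset by blast+
  have PE: "P \<subseteq> E" "Q \<subseteq> E" using P Q X by blast+
  have 1: "card (P \<union> Q) + card (P \<inter> Q) = card P + card Q" using card_Un_Int[OF fP] by simp
  have 2: "card (V P \<union> V Q) + card (V P \<inter> V Q) = card (V P) + card (V Q)"
    using card_Un_Int[OF V_fin[OF PE(1)] V_fin[OF PE(2)]] by simp
  have 3: "card (P \<inter> Q) \<le> card (V (P \<inter> Q))" using X(1) P(1) unfolding sparse_def by blast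
  have 4: "card (V (P \<inter> Q)) \<le> card (V P \<inter> V Q)"
  proof (rule card_mono)
    show "finite (V P \<inter> V Q)" using V_fin[OF PE(1)] by simp
    show "V (P \<inter> Q) \<subseteq> V P \<inter> V Q" using V_mono[of "P \<inter> Q" P] V_mono[of "P \<inter> Q" Q] by blast
  qed
  have 5: "card (P \<union> Q) \<le> card (V (P \<union> Q))" using X(1) P(1) Q(1) unfolding sparse_def by blast
  have "card (V (P \<union> Q)) = card (V P \<union> V Q)" by (simp add: V_Un)
  thus ?thesis using 1 2 3 4 5 P(2) Q(2) by linarith
qed

lemma side:
  assumes AE: "A \<subseteq> E" and leafless: "\<forall>v\<in>V E. \<not> is_leaf E ends v"
  obtains X P K where "X \<subseteq> A" "sparse X" "A - P \<subseteq> X" "P \<subseteq> A"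
    "2 * card (V A) + K \<le> card (V A \<inter> V (E - A)) + 2 * card X"
    "K = 0 \<Longrightarrow> V P \<inter> V (E - P) = {}"
proof -
  have fA: "finite A" using AE finE finite_subset by blast
  let ?W = "V A \<inter> V (E - A)"
  have "\<exists>X. (X \<subseteq> A \<and> sparse X) \<and> (\<forall>Y. (Y \<subseteq> A \<and> sparse Y) \<longrightarrow> card Y \<le> card X)"
  proof (rule ex_has_greatest_nat[of "\<lambda>X. X \<subseteq> A \<and> sparse X" "{}" card "card A + 1"])
    show "{} \<subseteq> A \<and> sparse {}" unfolding sparse_def by simp
    show "\<forall>y. y \<subseteq> A \<and> sparse y \<longrightarrow> card y < card A + 1"
    proof (intro allI impI)
      fix y assume "y \<subseteq> A \<and> sparse y"
      hence "card y \<le> card A" using card_mono[OF fA] by blast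
      thus "card y < card A + 1" by simp
    qed
  qed
  then obtain X where X: "X \<subseteq> A" "sparse X" and Xmax: "\<And>Y. Y \<subseteq> A \<Longrightarrow> sparse Y \<Longrightarrow> card Y \<le> card X"
    by blast
  have XE: "X \<subseteq> E" using X AE by blast
  have fX: "finite X" using fA X(1) finite_subset by blast
  have notsp: "\<not> sparse (insert h X)" if h: "h \<in> A" "h \<notin> X" for h
  proof
    assume "sparse (insert h X)"
    hence "card (insert h X) \<le> card X" using Xmax h X(1) by blast
    thus False using h fX by simp
  qed
  have endsX: "ends h \<subseteq> V X" if h: "h \<in> A" for h
  proof (cases "h \<in> X")
    case True thus ?thesis unfolding verts_def by blast
  next
    case False
    show ?thesis
    proof (rule ccontr)
      assume "\<not> ?thesis"
      then obtain v where "v \<in> ends h" "v \<notin> V X" by blast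
      from sparse_insert_new[OF X(2) XE _ this] h AE have "sparse (insert h X)" by blast
      thus False using notsp[OF h False] by blast
    qed
  qed
  have VAX: "V A = V X"
  proof
    show "V A \<subseteq> V X" using endsX unfolding verts_def by blast
    show "V X \<subseteq> V A" using V_mono[OF X(1)] .
  qed
  have "\<exists>T. (T \<subseteq> X \<and> card T = card (V T)) \<and> (\<forall>Y. (Y \<subseteq> X \<and> card Y = card (V Y)) \<longrightarrow> card Y \<le> card T)"
  proof (rule ex_has_greatest_nat[of "\<lambda>T. T \<subseteq> X \<and> card T = card (V T)" "{}" card "card X + 1"])
    show "{} \<subseteq> X \<and> card {} = card (V {})" by (simp add: V_empty)
    show "\<forall>y. y \<subseteq> X \<and> card y = card (V y) \<longrightarrow> card y < card X + 1"
    proof (intro allI impI)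
      fix y assume "y \<subseteq> X \<and> card y = card (V y)"
      hence "card y \<le> card X" using card_mono[OF fX] by blast
      thus "card y < card X + 1" by simp
    qed
  qed
  then obtain T where T: "T \<subseteq> X" "card T = card (V T)"
    and Tmax: "\<And>Y. Y \<subseteq> X \<Longrightarrow> card Y = card (V Y) \<Longrightarrow> card Y \<le> card T" by blast
  have fT: "finite T" using fX T(1) finite_subset by blast
  have Tall: "Y \<subseteq> T" if Y: "Y \<subseteq> X" "card Y = card (V Y)" for Y
  proof -
    have u: "card (T \<union> Y) = card (V (T \<union> Y))" using tight_union[OF X(2) XE T Y] .
    have "T \<union> Y \<subseteq> X" using T Y by blast
    hence "card (T \<union> Y) \<le> card T" using Tmax u by blast
    moreover have "finite (T \<union> Y)" using fX T(1) Y(1) finite_subset by blast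
    ultimately have "T \<union> Y = T" using card_subset_eq[of "T \<union> Y" T] card_mono[of "T \<union> Y" T]
      by (metis Un_upper1 card_seteq)
    thus ?thesis by blast
  qed
  define U where "U = V T"
  define F where "F = X - T"
  define Q where "Q = V A - U"
  have TE: "T \<subseteq> E" using T(1) XE by blast
  have fU: "finite U" unfolding U_def using V_fin[OF TE] .
  have UA: "U \<subseteq> V A" unfolding U_def using V_mono[of T A] T(1) X(1) by blast
  have nonX: "ends h \<subseteq> U" if h: "h \<in> A" "h \<notin> X" for h
  proof -
    have hE: "h \<in> E" using h AE by blast
    have iE: "insert h X \<subseteq> E" using hE XE by blast
    have "\<not> (\<forall>C. circ C \<longrightarrow> \<not> C \<subseteq> insert h X)" using notsp[OF h] sparse_I[OF iE] by blast
    then obtain C where C: "circ C" "C \<subseteq> insert h X" by blast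
    have hC: "h \<in> C"
    proof (rule ccontr)
      assume "h \<notin> C"
      hence "C \<subseteq> X" using C(2) by blast
      thus False using circ_not_sub_sparse[OF X(2) C(1)] by blast
    qed
    let ?C = "C - {h}"
    have C'X: "?C \<subseteq> X" using C(2) by blast
    have fC: "finite C" using circ_fin[OF C(1)] .
    have cC: "card ?C = card (V C)" using circ_card[OF C(1)] hC fC by (simp add: card_Diff_singleton)
    have s: "card ?C \<le> card (V ?C)" using X(2) C'X unfolding sparse_def by blast
    have sub: "V ?C \<subseteq> V C" by (rule V_mono) blast
    have VCeq: "V ?C = V C"
      using card_seteq[OF V_fin[OF circ_sub[OF C(1)]] sub] cC s by simp
    have "card ?C = card (V ?C)" using cC VCeq by simp
    hence "?C \<subseteq> T" using Tall C'X by blast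
    hence "V ?C \<subseteq> U" unfolding U_def by (rule V_mono)
    moreover have "ends h \<subseteq> V C" using hC unfolding verts_def by blast
    ultimately show ?thesis using VCeq by blast
  qed
  have Fedge: "\<not> ends h \<subseteq> U" if h: "h \<in> F" for h
  proof
    assume a: "ends h \<subseteq> U"
    have hX: "h \<in> X" "h \<notin> T" using h unfolding F_def by blast+
    have "insert h T \<subseteq> X" using hX T(1) by blast
    hence "card (insert h T) \<le> card (V (insert h T))" using X(2) unfolding sparse_def by blast
    moreover have "V (insert h T) = U" using a unfolding U_def V_insert by blast
    moreover have "card (insert h T) = card T + 1" using hX fT by simp
    ultimately show False using T(2) unfolding U_def by simp
  qed
  have fF: "finite F" unfolding F_def using fX by simp
  have FE: "F \<subseteq> E" unfolding F_def using XE by blast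
  have fVA: "finite (V A)" using V_fin[OF AE] .
  have fQ: "finite Q" unfolding Q_def using fVA by simp
  have cX: "card X = card T + card F" unfolding F_def using card_Diff_subset[OF fT T(1)] card_mono[OF fX T(1)] by simp
  have cVA: "card (V A) = card U + card Q" unfolding Q_def using card_Diff_subset[OF fU UA] card_mono[OF fVA UA] by simp
  define c where "c = card {h\<in>F. ends h \<inter> U \<noteq> {}}"
  have S_eq: "(\<Sum>v\<in>Q. degree F ends v) = (\<Sum>h\<in>F. cw h * card (ends h \<inter> Q))"
    using deg_sum[OF fF fQ] .
  have termb: "cw h * card (ends h \<inter> Q) \<le> 2 - (if ends h \<inter> U \<noteq> {} then 1 else 0)" if h: "h \<in> F" for h
  proof -
    have hE: "h \<in> E" using h FE by blast
    have hfin: "finite (ends h)" using ends_fin[OF hE] .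
    have c2: "cw h * card (ends h) = 2" using cw_card[OF hE] .
    have hA: "h \<in> A" using h X(1) unfolding F_def by blast
    have eA: "ends h \<subseteq> V A" using hA unfolding verts_def by blast
    show ?thesis
    proof (cases "ends h \<inter> U = {}")
      case True
      hence "ends h \<inter> Q = ends h" using eA unfolding Q_def by blast
      thus ?thesis using True c2 by simp
    next
      case False
      then obtain u where u: "u \<in> ends h" "u \<in> U" by blast
      have nl: "\<not> is_loop ends h"
      proof
        assume "is_loop ends h"
        hence "card (ends h) = 1" unfolding is_loop_def .
        then obtain z where "ends h = {z}" using card_1_singletonE by blast
        hence "ends h \<subseteq> U" using u by auto
        thus False using Fedge[OF h] by blast
      qed
      have cw1: "cw h = 1" using nl unfolding cw_def by simp
      have "ends h \<inter> Q \<subset> ends h" using u unfolding Q_def by blast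
      hence "card (ends h \<inter> Q) < card (ends h)" using psubset_card_mono[OF hfin] by blast
      hence "card (ends h \<inter> Q) \<le> 1" using c2 cw1 by simp
      thus ?thesis using cw1 False by simp
    qed
  qed
  have S_up: "(\<Sum>v\<in>Q. degree F ends v) + c \<le> 2 * card F"
  proof -
    have "(\<Sum>h\<in>F. cw h * card (ends h \<inter> Q)) \<le> (\<Sum>h\<in>F. 2 - (if ends h \<inter> U \<noteq> {} then 1 else 0))"
      by (rule sum_mono) (rule termb)
    moreover have "(\<Sum>h\<in>F. 2 - (if ends h \<inter> U \<noteq> {} then 1 else 0)) + c = (\<Sum>h\<in>F. (2::nat))"
    proof -
      have "(\<Sum>h\<in>F. 2 - (if ends h \<inter> U \<noteq> {} then 1 else 0)) + (\<Sum>h\<in>F. (if ends h \<inter> U \<noteq> {} then 1 else 0))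
            = (\<Sum>h\<in>F. (2 - (if ends h \<inter> U \<noteq> {} then 1 else 0)) + (if ends h \<inter> U \<noteq> {} then 1 else 0))"
        by (simp add: sum.distrib)
      also have "\<dots> = (\<Sum>h\<in>F. (2::nat))" by (rule sum.cong) auto
      finally show ?thesis unfolding c_def using sum.inter_filter[OF fF, of "\<lambda>_. (1::nat)" "\<lambda>h. ends h \<inter> U \<noteq> {}"]
        by simp
    qed
    ultimately show ?thesis using S_eq by simp
  qed
  have degF: "degree F ends v = degree A ends v" if v: "v \<in> Q" for v
  proof -
    have "incident_edges F ends v = incident_edges A ends v"
    proof
      show "incident_edges F ends v \<subseteq> incident_edges A ends v"
        unfolding incident_edges_def F_def using X(1) by blast
      show "incident_edges A ends v \<subseteq> incident_edges F ends v"
      proof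
        fix h assume "h \<in> incident_edges A ends v"
        hence h: "h \<in> A" "v \<in> ends h" unfolding incident_edges_def by blast+
        have vU: "v \<notin> U" using v unfolding Q_def by blast
        have "h \<in> X" using nonX[of h] h vU by blast
        moreover have "h \<notin> T" using h(2) vU unfolding U_def verts_def by blast
        ultimately show "h \<in> incident_edges F ends v" using h unfolding incident_edges_def F_def by blast
      qed
    qed
    thus ?thesis unfolding degree_def by simp
  qed
  have lb: "(if v \<in> ?W then 1 else 2) \<le> degree F ends v" if v: "v \<in> Q" for v
  proof -
    have vA: "v \<in> V A" using v unfolding Q_def by blast
    show ?thesis
    proof (cases "v \<in> ?W")
      case True thus ?thesis using deg_ge1[OF AE vA] degF[OF v] by simp
    next
      case False
      hence vB: "v \<notin> V (E - A)" using vA by blast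
      have "incident_edges E ends v = incident_edges A ends v"
        using vB AE unfolding incident_edges_def verts_def by blast
      hence "degree E ends v = degree A ends v" unfolding degree_def by simp
      moreover have "v \<in> V E" using vA V_mono[OF AE] by blast
      moreover have "degree E ends v \<ge> 2" using deg_ge2[of E v] leafless \<open>v \<in> V E\<close> by blast
      ultimately show ?thesis using False degF[OF v] by simp
    qed
  qed
  have S_low: "2 * card Q \<le> (\<Sum>v\<in>Q. degree F ends v) + card (Q \<inter> ?W)"
  proof -
    have "(\<Sum>v\<in>Q. (if v \<in> ?W then 1 else 2)) \<le> (\<Sum>v\<in>Q. degree F ends v)"
      by (rule sum_mono) (rule lb)
    moreover have "(\<Sum>v\<in>Q. (if v \<in> ?W then 1 else 2)) + card (Q \<inter> ?W) = (\<Sum>v\<in>Q. (2::nat))"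
    proof -
      have "(\<Sum>v\<in>Q. (if v \<in> ?W then 1 else 2)) + (\<Sum>v\<in>Q. (if v \<in> ?W then 1 else 0))
            = (\<Sum>v\<in>Q. (if v \<in> ?W then 1 else 2) + (if v \<in> ?W then 1 else 0))"
        by (simp add: sum.distrib)
      also have "\<dots> = (\<Sum>v\<in>Q. (2::nat))" by (rule sum.cong) auto
      finally show ?thesis using sum.inter_filter[OF fQ, of "\<lambda>_. (1::nat)" "\<lambda>v. v \<in> ?W"]
        by (simp add: Int_def)
    qed
    ultimately show ?thesis by simp
  qed
  have Wsplit: "card (Q \<inter> ?W) + card (?W \<inter> U) = card ?W"
  proof -
    have fW: "finite ?W" using fVA by simp
    have "card ?W = card (?W \<inter> U) + card (?W - U)" using card_Int_Diff[OF fW] by simp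
    moreover have "?W - U = Q \<inter> ?W" unfolding Q_def by blast
    ultimately show ?thesis by simp
  qed
  define K where "K = card (?W \<inter> U) + c"
  define P where "P = A - F"
  have "X \<subseteq> A" "sparse X" using X .
  moreover have "A - P \<subseteq> X" unfolding P_def F_def using X(1) by blast
  moreover have "P \<subseteq> A" unfolding P_def by blast
  moreover have "2 * card (V A) + K \<le> card ?W + 2 * card X"
    using cX cVA S_up S_low Wsplit T(2) unfolding K_def U_def by linarith
  moreover have "V P \<inter> V (E - P) = {}" if K0: "K = 0"
  proof -
    have c0: "c = 0" and WU: "?W \<inter> U = {}" using K0 unfolding K_def
      using card_0_eq[of "?W \<inter> U"] fVA by auto
    have cset: "{h\<in>F. ends h \<inter> U \<noteq> {}} = {}" using c0 fF unfolding c_def by simp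
    have VP: "V P \<subseteq> U"
    proof
      fix v assume "v \<in> V P"
      then obtain h where h: "h \<in> P" "v \<in> ends h" unfolding V_mem by blast
      show "v \<in> U"
      proof (cases "h \<in> X")
        case True
        hence "h \<in> T" using h(1) unfolding P_def F_def by blast
        thus ?thesis using h(2) unfolding U_def verts_def by blast
      next
        case False thus ?thesis using nonX[of h] h unfolding P_def by blast
      qed
    qed
    show ?thesis
    proof (rule ccontr)
      assume "V P \<inter> V (E - P) \<noteq> {}"
      then obtain v where v: "v \<in> V P" "v \<in> V (E - P)" by blast
      from v(2) obtain g where g: "g \<in> E - P" "v \<in> ends g" unfolding V_mem by blast
      have vU: "v \<in> U" using VP v(1) by blast
      show False
      proof (cases "g \<in> A")
        case True
        hence "g \<in> F" using g(1) unfolding P_def by blast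
        thus False using cset g(2) vU by blast
      next
        case False
        hence "v \<in> V (E - A)" using g unfolding V_mem by blast
        moreover have "v \<in> V A" using vU UA by blast
        ultimately show False using WU vU by blast
      qed
    qed
  qed
  ultimately show ?thesis using that by blast
qed

end



context G begin

lemma separator:
  assumes conn: "graph_connected E ends" and leafless: "\<forall>v\<in>V E. \<not> is_leaf E ends v"
    and AE: "A \<subseteq> E" and Ane: "A \<noteq> {}" and Bne: "E - A \<noteq> {}"
    and sep: "\<And>C. circ C \<Longrightarrow> C \<subseteq> A \<or> C \<subseteq> E - A"
    and hasc: "circ C0"
  shows False
proof -
  let ?B = "E - A"
  have BE: "?B \<subseteq> E" by blast
  have EB: "E - ?B = A" using AE by blast
  obtain XA PA KA where A1: "XA \<subseteq> A" "sparse XA" "A - PA \<subseteq> XA" "PA \<subseteq> A"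
    "2 * card (V A) + KA \<le> card (V A \<inter> V ?B) + 2 * card XA"
    and A2: "KA = 0 \<Longrightarrow> V PA \<inter> V (E - PA) = {}"
    using side[OF AE leafless] by blast
  obtain XB PB KB where B1: "XB \<subseteq> ?B" "sparse XB" "?B - PB \<subseteq> XB" "PB \<subseteq> ?B"
    "2 * card (V ?B) + KB \<le> card (V ?B \<inter> V A) + 2 * card XB"
    and B2: "KB = 0 \<Longrightarrow> V PB \<inter> V (E - PB) = {}"
    using side[OF BE leafless] unfolding EB by blast
  have XE: "XA \<union> XB \<subseteq> E" using A1(1) B1(1) AE by blast
  have spU: "sparse (XA \<union> XB)"
  proof (rule sparse_I[OF XE])
    fix C assume c: "circ C"
    show "\<not> C \<subseteq> XA \<union> XB"
    proof
      assume CU: "C \<subseteq> XA \<union> XB"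
      from sep[OF c] show False
      proof
        assume "C \<subseteq> A"
        hence "C \<subseteq> XA" using CU B1(1) by blast
        thus False using circ_not_sub_sparse[OF A1(2) c] by blast
      next
        assume "C \<subseteq> ?B"
        hence "C \<subseteq> XB" using CU A1(1) by blast
        thus False using circ_not_sub_sparse[OF B1(2) c] by blast
      qed
    qed
  qed
  have fA: "finite (V A)" using V_fin[OF AE] .
  have fB: "finite (V ?B)" using V_fin[OF BE] .
  have fXA: "finite XA" "finite XB" using XE finE finite_subset by blast+
  have dis: "XA \<inter> XB = {}" using A1(1) B1(1) by blast
  have "card (XA \<union> XB) \<le> card (V (XA \<union> XB))" using spU unfolding sparse_def by blast
  also have "\<dots> \<le> card (V A \<union> V ?B)"
  proof (rule card_mono)
    show "finite (V A \<union> V ?B)" using fA fB by simp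
    show "V (XA \<union> XB) \<subseteq> V A \<union> V ?B" using V_mono[OF A1(1)] V_mono[OF B1(1)] unfolding V_Un by blast
  qed
  finally have 1: "card XA + card XB \<le> card (V A \<union> V ?B)" using card_Un_disjoint[OF fXA dis] by simp
  have 2: "card (V A \<union> V ?B) + card (V A \<inter> V ?B) = card (V A) + card (V ?B)"
    using card_Un_Int[OF fA fB] by simp
  have 3: "card (V ?B \<inter> V A) = card (V A \<inter> V ?B)" by (simp add: Int_commute)
  have "KA = 0" "KB = 0" using 1 2 3 A1(5) B1(5) by linarith+
  have PA0: "PA = {}"
  proof -
    have "PA = {} \<or> PA = E" using sep_conn[OF conn _ A2[OF \<open>KA = 0\<close>]] A1(4) AE by blast
    thus ?thesis using A1(4) Bne by blast
  qed
  have PB0: "PB = {}"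
  proof -
    have "PB = {} \<or> PB = E" using sep_conn[OF conn _ B2[OF \<open>KB = 0\<close>]] B1(4) by blast
    thus ?thesis using B1(4) Ane AE by blast
  qed
  have "E \<subseteq> XA \<union> XB" using A1(3) B1(3) PA0 PB0 by blast
  hence "sparse E" using sparse_sub[OF spU] by blast
  thus False using circ_not_sub_sparse[OF _ hasc] circ_sub[OF hasc] by blast
qed

lemma a1_to_a2:
  assumes nt: "mat_nontrivial E circ" and conn: "graph_connected E ends" and cac: "cacti_graph E ends"
  shows "mat_connected E circ"
proof -
  have leafless: "\<forall>v\<in>V E. \<not> is_leaf E ends v" using cac unfolding cacti_graph_def by blast
  obtain C0 where C0: "circ C0" using nt unfolding mat_nontrivial_def by blast
  have c2: "card E \<ge> 2" using circ_card2[OF C0] card_mono[OF finE circ_sub[OF C0]] by simp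
  have main: "y = x \<or> (\<exists>C. circ C \<and> x \<in> C \<and> y \<in> C)" if x: "x \<in> E" and y: "y \<in> E" for x y
  proof -
    define A where "A = {y\<in>E. y = x \<or> (\<exists>C. circ C \<and> x \<in> C \<and> y \<in> C)}"
    have AE: "A \<subseteq> E" unfolding A_def by blast
    have Ane: "A \<noteq> {}" using x unfolding A_def by blast
    have sep: "C \<subseteq> A \<or> C \<subseteq> E - A" if c: "circ C" for C
    proof (cases "C \<inter> A = {}")
      case True thus ?thesis using circ_sub[OF c] by blast
    next
      case False
      then obtain w where w: "w \<in> C" "w \<in> A" by blast
      have "C \<subseteq> A"
      proof
        fix z assume z: "z \<in> C"
        have zE: "z \<in> E" using z circ_sub[OF c] by blast
        show "z \<in> A"
        proof (cases "w = x")
          case True thus ?thesis using z zE c w unfolding A_def by blast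
        next
          case False
          then obtain C' where C': "circ C'" "x \<in> C'" "w \<in> C'" using w(2) unfolding A_def by blast
          have "C' \<inter> C \<noteq> {}" using C'(3) w(1) by blast
          from circ_trans[OF C'(1) c C'(2) z this] show ?thesis using zE unfolding A_def by blast
        qed
      qed
      thus ?thesis by blast
    qed
    have "E - A = {}"
    proof (rule ccontr)
      assume "E - A \<noteq> {}"
      from separator[OF conn leafless AE Ane this sep C0] show False .
    qed
    thus ?thesis using y unfolding A_def by blast
  qed
  show ?thesis unfolding mat_connected_def
  proof (intro conjI ballI)
    show "2 \<le> card E" using c2 .
    fix x y assume x: "x \<in> E" and y: "y \<in> E"
    show "\<exists>C. circ C \<and> x \<in> C \<and> y \<in> C"
    proof (cases "y = x")
      case False thus ?thesis using main[OF x y] by blast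
    next
      case True
      have "\<exists>z. z \<in> E \<and> z \<noteq> x"
      proof (rule ccontr)
        assume "\<not> ?thesis"
        hence "E \<subseteq> {x}" by blast
        hence "card E \<le> 1" using card_mono[of "{x}" E] by simp
        thus False using c2 by simp
      qed
      then obtain z where z: "z \<in> E" "z \<noteq> x" by blast
      thus ?thesis using main[OF x z(1)] True by blast
    qed
  qed
qed

end



context G begin

lemma other_elem: assumes "card E \<ge> 2" "x \<in> E" shows "\<exists>z. z \<in> E \<and> z \<noteq> x"
proof (rule ccontr)
  assume "\<not> ?thesis"
  hence "E \<subseteq> {x}" by blast
  hence "card E \<le> 1" using card_mono[of "{x}" E] by simp
  thus False using assms(1) by simp
qed

lemma cocirc_exists:
  assumes c2: "card E \<ge> 2" and ex: "\<And>x. x \<in> E \<Longrightarrow> \<exists>y. y \<in> E \<and> y \<noteq> x \<and> (\<exists>C. circ C \<and> x \<in> C \<and> y \<in> C)"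
  shows "\<exists>D. mat_cocircuit E circ D"
proof -
  let ?P = "\<lambda>D. D \<subseteq> E \<and> D \<noteq> {} \<and> (\<forall>B. mat_basis E circ B \<longrightarrow> D \<inter> B \<noteq> {})"
  have Ene: "E \<noteq> {}" using c2 by auto
  have basis_ne: "B \<noteq> {}" if B: "mat_basis E circ B" for B
  proof
    assume B0: "B = {}"
    obtain x where x: "x \<in> E" using Ene by blast
    have "mat_indep E circ {x}" unfolding mat_indep_def
    proof (intro conjI allI impI)
      show "{x} \<subseteq> E" using x by simp
      fix C assume c: "circ C"
      show "\<not> C \<subseteq> {x}"
      proof
        assume "C \<subseteq> {x}"
        hence "card C \<le> 1" using card_mono[of "{x}" C] by simp
        thus False using circ_card2[OF c] by simp
      qed
    qed
    hence "{x} = B" using B B0 unfolding mat_basis_def by blast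
    thus False using B0 by simp
  qed
  have PE: "?P E"
  proof (intro conjI allI impI)
    show "E \<subseteq> E" "E \<noteq> {}" using Ene by auto
    fix B assume B: "mat_basis E circ B"
    have "B \<subseteq> E" using B unfolding mat_basis_def mat_indep_def by blast
    thus "E \<inter> B \<noteq> {}" using basis_ne[OF B] by blast
  qed
  from ex_has_least_nat[of ?P E card, OF PE]
  obtain D where D: "?P D" and Dmin: "\<forall>D'. ?P D' \<longrightarrow> card D \<le> card D'" by blast
  have "mat_cocircuit E circ D" unfolding mat_cocircuit_def Let_def
  proof (intro conjI allI impI)
    show "D \<subseteq> E" "D \<noteq> {}" using D by auto
    show "\<And>B. mat_basis E circ B \<Longrightarrow> D \<inter> B \<noteq> {}" using D by blast
    fix D' assume D': "?P D' \<and> D' \<subseteq> D"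
    have fD: "finite D" using D finE finite_subset by blast
    have "card D \<le> card D'" using Dmin D' by blast
    thus "D' = D" using card_seteq[OF fD] D' by blast
  qed
  thus ?thesis by blast
qed

lemma a2_to_a1:
  assumes mc: "mat_connected E circ"
  shows "mat_nontrivial E circ \<and> graph_connected E ends \<and> cacti_graph E ends"
proof -
  have c2: "card E \<ge> 2" and pair: "\<And>x y. x \<in> E \<Longrightarrow> y \<in> E \<Longrightarrow> \<exists>C. circ C \<and> x \<in> C \<and> y \<in> C"
    using mc unfolding mat_connected_def by blast+
  have Ene: "E \<noteq> {}" using c2 by auto
  have ex: "\<exists>y. y \<in> E \<and> y \<noteq> x \<and> (\<exists>C. circ C \<and> x \<in> C \<and> y \<in> C)" if x: "x \<in> E" for x
  proof -
    obtain y where "y \<in> E" "y \<noteq> x" using other_elem[OF c2 x] by blast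
    thus ?thesis using pair[OF x] by blast
  qed
  obtain x0 where x0: "x0 \<in> E" using Ene by blast
  obtain C0 where C0: "circ C0" using pair[OF x0 x0] by blast
  have nt: "mat_nontrivial E circ"
    unfolding mat_nontrivial_def using C0 cocirc_exists[OF c2 ex] by blast
  have conn: "graph_connected E ends"
  proof (rule ccontr)
    assume nc: "\<not> graph_connected E ends"
    have VE: "V E \<noteq> {}"
    proof -
      obtain v where v: "v \<in> ends x0" using ends_ne[OF x0] by blast
      have "v \<in> V E" using x0 v unfolding V_mem by blast
      thus ?thesis by blast
    qed
    have "\<not> (\<forall>u\<in>V E. \<forall>w\<in>V E. reach E ends u w)" using nc VE unfolding graph_connected_def by simp
    then obtain u w where uw: "u \<in> V E" "w \<in> V E" "\<not> reach E ends u w" by blast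
    define P where "P = component_edges E ends u"
    have PE: "P \<subseteq> E" unfolding P_def component_edges_def by blast
    have reach_step: "reach E ends u b" if "reach E ends u a" "e \<in> E" "a \<in> ends e" "b \<in> ends e" for a b e
    proof -
      have "(a, b) \<in> adj E ends" using that(2-4) unfolding adj_def by blast
      thus ?thesis using that(1) unfolding reach_def by simp
    qed
    have disj: "V P \<inter> V (E - P) = {}"
    proof (rule ccontr)
      assume "V P \<inter> V (E - P) \<noteq> {}"
      then obtain v where v: "v \<in> V P" "v \<in> V (E - P)" by blast
      obtain p where p: "p \<in> P" "v \<in> ends p" using v(1) unfolding V_mem by blast
      obtain q where q: "q \<in> E - P" "v \<in> ends q" using v(2) unfolding V_mem by blast
      obtain z where z: "z \<in> ends p" "reach E ends u z" using p(1) unfolding P_def component_edges_def by blast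
      have "reach E ends u v" using reach_step[OF z(2) _ z(1) p(2)] p(1) PE by blast
      hence "q \<in> P" using q unfolding P_def component_edges_def by blast
      thus False using q by blast
    qed
    obtain hu where hu: "hu \<in> E" "u \<in> ends hu" using uw(1) unfolding V_mem by blast
    have "hu \<in> P" using hu unfolding P_def component_edges_def reach_def by blast
    obtain hw where hw: "hw \<in> E" "w \<in> ends hw" using uw(2) unfolding V_mem by blast
    have "hw \<notin> P"
    proof
      assume "hw \<in> P"
      then obtain z where z: "z \<in> ends hw" "reach E ends u z" unfolding P_def component_edges_def by blast
      have "reach E ends u w" using reach_step[OF z(2) hw(1) z(1) hw(2)] .
      thus False using uw(3) by blast
    qed
    obtain C where C: "circ C" "hu \<in> C" "hw \<in> C" using pair[OF hu(1) hw(1)] by blast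
    show False using circ_split[OF C(1) _ _ disj] C \<open>hu \<in> P\<close> \<open>hw \<notin> P\<close> by blast
  qed
  have noleaf: "\<not> is_leaf E ends v" if v: "v \<in> V E" for v
  proof
    assume "is_leaf E ends v"
    then obtain h where h: "incident_edges E ends v = {h}" "\<not> is_loop ends h" unfolding is_leaf_def by blast
    have hE: "h \<in> E" "v \<in> ends h" using h(1) unfolding incident_edges_def by blast+
    obtain y C where y: "y \<in> E" "y \<noteq> h" and C: "circ C" "h \<in> C" "y \<in> C" using ex[OF hE(1)] by blast
    let ?C = "C - {h}"
    have CE: "C \<subseteq> E" using circ_sub[OF C(1)] .
    have fC: "finite C" using circ_fin[OF C(1)] .
    have 1: "card ?C \<le> card (V ?C)" using circ_proper[OF C(1), of ?C] C(2) by blast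
    have vout: "v \<notin> V ?C"
    proof
      assume "v \<in> V ?C"
      then obtain g where g: "g \<in> ?C" "v \<in> ends g" unfolding V_mem by blast
      have "g \<in> incident_edges E ends v" using g CE unfolding incident_edges_def by blast
      thus False using h(1) g(1) by blast
    qed
    have vin: "v \<in> V C" using C(2) hE(2) unfolding V_mem by blast
    have sub: "V ?C \<subseteq> V C" by (rule V_mono) blast
    have 2: "card (V ?C) < card (V C)" using card_lt[OF V_fin[OF CE] sub vin vout] .
    have "card C > 0" using C(2) fC card_gt_0_iff by blast
    hence 3: "card ?C = card C - 1" using C(2) by (simp add: card_Diff_singleton)
    show False using 1 2 3 circ_card[OF C(1)] by simp
  qed
  have compE: "component_edges E ends v = E" if v: "v \<in> V E" for v
  proof
    show "component_edges E ends v \<subseteq> E" unfolding component_edges_def by blast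
    show "E \<subseteq> component_edges E ends v"
    proof
      fix h assume h: "h \<in> E"
      obtain z where z: "z \<in> ends h" using ends_ne[OF h] by blast
      have "z \<in> V E" using z h unfolding V_mem by blast
      hence "reach E ends v z" using conn v unfolding graph_connected_def by blast
      thus "h \<in> component_edges E ends v" using h z unfolding component_edges_def by blast
    qed
  qed
  have nocyc: "\<not> is_cycle_graph (component_edges E ends v) ends" if v: "v \<in> V E" for v
  proof
    assume "is_cycle_graph (component_edges E ends v) ends"
    hence d2: "\<forall>w\<in>V E. degree E ends w = 2" unfolding compE[OF v] is_cycle_graph_def by blast
    have "sparse E" unfolding sparse_def
    proof (intro allI impI)
      fix D assume D: "D \<subseteq> E"
      have "2 * card D = (\<Sum>w\<in>V D. degree D ends w)" using handshake[OF D] by simp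
      also have "\<dots> \<le> (\<Sum>w\<in>V D. degree E ends w)"
        by (rule sum_mono) (rule deg_mono[OF D finE])
      also have "\<dots> = (\<Sum>w\<in>V D. 2)"
      proof (rule sum.cong[OF refl])
        fix w assume "w \<in> V D"
        hence "w \<in> V E" using V_mono[OF D] by blast
        thus "degree E ends w = 2" using d2 by blast
      qed
      also have "\<dots> = 2 * card (V D)" by simp
      finally show "card D \<le> card (V D)" by simp
    qed
    thus False using circ_not_sub_sparse[OF _ C0] circ_sub[OF C0] by blast
  qed
  have "cacti_graph E ends" unfolding cacti_graph_def using noleaf nocyc by blast
  thus ?thesis using nt conn by blast
qed

end

theorem mainTheorem15:
  fixes E :: "'e set" and ends :: "'e \<Rightarrow> 'v set"
  assumes "graph E ends"
  shows "(mat_nontrivial E (M1_circuit E ends) \<and> graph_connected E ends \<and> cacti_graph E ends)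
         \<longleftrightarrow> mat_connected E (M1_circuit E ends)"
proof -
  interpret G E ends using assms by unfold_locales
  show ?thesis using a1_to_a2 a2_to_a1 by blast
qed



end
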